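(* Let $D$ be an integral domain with field of fractions $K$ and let $A$ be a $D$-algebra with standard assumptions. Assume that $A$ is an integral $D$-algebra of bounded degree. Then $\textnormal{Int}_K(A)\neq D[X]$ if and only if $\textnormal{Int}(D)\neq D[X]$. In particular, if $A$ is finitely generated as a $D$-module, then $\textnormal{Int}_K(A)\neq D[X]$ if and only if $\textnormal{Int}(D)\neq D[X]$.
   Context: A $D$-algebra $A$ (not necessarily commutative) satisfies the standard assumptions if it is torsion-free as a $D$-module and $A\cap K = D$, where $A$ and $K$ are identified with their images in $B=K\otimes_D A$. Polynomials in $K[X]$ are evaluated at elements of $A$ inside $B$. $\textnormal{Int}_K(A)=\{f\in K[X]\mid f(A)\subseteq A\}$ and $\textnormal{Int}(D)=\{f\in K[X]\mid f(D)\subseteq D\}$. $A$ is an integral algebra of bounded degree if there is $n$ such that every element of $A$ satisfies a monic polynomial in $D[X]$ of degree at most $n$. *)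

theory Defs
  imports "HOL-Computational_Algebra.Polynomial"
begin

text \<open>D is modelled as a subring of a field 'k which is its field of fractions K.\<close>

definition subring_of :: "'a::ring_1 set \<Rightarrow> bool" where
  "subring_of S \<longleftrightarrow> 0 \<in> S \<and> 1 \<in> S \<and>
     (\<forall>x\<in>S. \<forall>y\<in>S. x + y \<in> S \<and> x - y \<in> S \<and> x * y \<in> S)"

definition is_fraction_field_of :: "'k::field set \<Rightarrow> bool" where
  "is_fraction_field_of D \<longleftrightarrow> (\<forall>k. \<exists>a\<in>D. \<exists>b\<in>D. b \<noteq> 0 \<and> k = a / b)"

text \<open>phi makes the ring 'b a (not necessarily commutative) K-algebra: a ring
  homomorphism K -> B with central image.\<close>
definition central_alg_map :: "('k::field \<Rightarrow> 'b::ring_1) \<Rightarrow> bool" where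
  "central_alg_map \<phi> \<longleftrightarrow> \<phi> 0 = 0 \<and> \<phi> 1 = 1 \<and>
     (\<forall>x y. \<phi> (x + y) = \<phi> x + \<phi> y \<and> \<phi> (x * y) = \<phi> x * \<phi> y) \<and>
     (\<forall>k b. \<phi> k * b = b * \<phi> k)"

definition peval :: "('k::field \<Rightarrow> 'b::ring_1) \<Rightarrow> 'k poly \<Rightarrow> 'b \<Rightarrow> 'b" where
  "peval \<phi> f b = (\<Sum>i\<le>degree f. \<phi> (coeff f i) * b ^ i)"

text \<open>Standard assumptions: A is a D-subalgebra of the K-algebra B = K \<otimes>_D A,
  A is torsion-free over D, and A \<inter> K = D.\<close>
definition standard_assumptions ::
    "'k::field set \<Rightarrow> ('k \<Rightarrow> 'b::ring_1) \<Rightarrow> 'b set \<Rightarrow> bool" where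
  "standard_assumptions D \<phi> A \<longleftrightarrow>
     subring_of A \<and> \<phi> ` D \<subseteq> A \<and>
     (\<forall>d\<in>D. \<forall>a\<in>A. d \<noteq> 0 \<longrightarrow> \<phi> d * a = 0 \<longrightarrow> a = 0) \<and>
     (\<forall>b. \<exists>k a. a \<in> A \<and> b = \<phi> k * a) \<and>
     {k. \<phi> k \<in> A} = D"

definition poly_over :: "'k::field set \<Rightarrow> 'k poly set" where
  "poly_over D = {f. \<forall>i. coeff f i \<in> D}"

definition Int_K :: "('k::field \<Rightarrow> 'b::ring_1) \<Rightarrow> 'b set \<Rightarrow> 'k poly set" where
  "Int_K \<phi> A = {f. \<forall>a\<in>A. peval \<phi> f a \<in> A}"

definition Int_D :: "'k::field set \<Rightarrow> 'k poly set" where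
  "Int_D D = {f. \<forall>d\<in>D. poly f d \<in> D}"

definition integral_bounded_degree ::
    "'k::field set \<Rightarrow> ('k \<Rightarrow> 'b::ring_1) \<Rightarrow> 'b set \<Rightarrow> bool" where
  "integral_bounded_degree D \<phi> A \<longleftrightarrow>
     (\<exists>n. \<forall>a\<in>A. \<exists>p. p \<in> poly_over D \<and> lead_coeff p = 1 \<and> degree p \<le> n \<and> peval \<phi> p a = 0)"

definition fin_gen_module ::
    "'k::field set \<Rightarrow> ('k \<Rightarrow> 'b::ring_1) \<Rightarrow> 'b set \<Rightarrow> bool" where
  "fin_gen_module D \<phi> A \<longleftrightarrow>
     (\<exists>S. finite S \<and> S \<subseteq> A \<and>
        (\<forall>a\<in>A. \<exists>c. (\<forall>s\<in>S. c s \<in> D) \<and> a = (\<Sum>s\<in>S. \<phi> (c s) * s)))"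

end

theory Submission
  imports Defs "HOL-Library.FuncSet"
begin


lemma sr0: "subring_of S \<Longrightarrow> (0::'a::ring_1) \<in> S" by (simp add: subring_of_def)
lemma sr1: "subring_of S \<Longrightarrow> (1::'a::ring_1) \<in> S" by (simp add: subring_of_def)
lemma sr_add: "subring_of S \<Longrightarrow> x \<in> S \<Longrightarrow> y \<in> S \<Longrightarrow> x + y \<in> S" by (simp add: subring_of_def)
lemma sr_diff: "subring_of S \<Longrightarrow> x \<in> S \<Longrightarrow> y \<in> S \<Longrightarrow> x - y \<in> S" by (simp add: subring_of_def)
lemma sr_mult: "subring_of S \<Longrightarrow> x \<in> S \<Longrightarrow> y \<in> S \<Longrightarrow> x * y \<in> S" by (simp add: subring_of_def)
lemma sr_uminus: "subring_of S \<Longrightarrow> x \<in> S \<Longrightarrow> - x \<in> S"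
  using sr_diff[of S 0 x] sr0[of S] by simp

lemma sr_sum: "subring_of S \<Longrightarrow> (\<And>i. i \<in> I \<Longrightarrow> f i \<in> S) \<Longrightarrow> sum f I \<in> S"
  by (induction I rule: infinite_finite_induct) (auto simp: sr0 sr_add)
lemma sr_prod: "subring_of S \<Longrightarrow> (\<And>i. i \<in> I \<Longrightarrow> f i \<in> S) \<Longrightarrow> prod f I \<in> S"
  by (induction I rule: infinite_finite_induct) (auto simp: sr1 sr_mult)
lemma sr_power: "subring_of S \<Longrightarrow> x \<in> S \<Longrightarrow> x ^ n \<in> S"
  by (induction n) (auto simp: sr1 sr_mult)
lemma sr_of_nat: "subring_of S \<Longrightarrow> of_nat n \<in> S"
  by (induction n) (auto simp: sr0 sr1 sr_add)
lemma sr_of_int: "subring_of S \<Longrightarrow> of_int z \<in> S"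
proof (cases "z \<ge> 0")
  case True
  assume S: "subring_of S"
  have "of_int z = of_nat (nat z)" using True by simp
  then show ?thesis using sr_of_nat[OF S, of "nat z"] by metis
next
  case False
  assume S: "subring_of S"
  have "of_int z = - of_nat (nat (- z))" using False by simp
  then show ?thesis using sr_of_nat[OF S, of "nat (-z)"] sr_uminus[OF S] by metis
qed
lemma sr_Ints: "subring_of S \<Longrightarrow> x \<in> \<int> \<Longrightarrow> x \<in> S"
  by (auto elim!: Ints_cases simp: sr_of_int)

context fixes \<phi> :: "'k::field \<Rightarrow> 'b::ring_1" assumes cm: "central_alg_map \<phi>"
begin
lemma phi0: "\<phi> 0 = 0" using cm unfolding central_alg_map_def by blast
lemma phi1: "\<phi> 1 = 1" using cm unfolding central_alg_map_def by blast
lemma phi_add: "\<phi> (x + y) = \<phi> x + \<phi> y" using cm unfolding central_alg_map_def by blast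
lemma phi_mult: "\<phi> (x * y) = \<phi> x * \<phi> y" using cm unfolding central_alg_map_def by blast
lemma phi_comm: "\<phi> k * b = b * \<phi> k" using cm unfolding central_alg_map_def by blast
lemma phi_uminus: "\<phi> (- x) = - \<phi> x"
proof -
  have "\<phi> x + \<phi> (- x) = 0" using phi_add[of x "-x"] phi0 by simp
  from minus_unique[OF this] show ?thesis by simp
qed
lemma phi_diff: "\<phi> (x - y) = \<phi> x - \<phi> y"
  using phi_add[of x "-y"] phi_uminus[of y] by simp
lemma phi_sum: "\<phi> (sum f I) = (\<Sum>i\<in>I. \<phi> (f i))"
  by (induction I rule: infinite_finite_induct) (auto simp: phi0 phi_add)
lemma phi_power: "\<phi> (x ^ n) = \<phi> x ^ n"
  by (induction n) (auto simp: phi1 phi_mult)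
lemma phi_inj: "\<phi> x = \<phi> y \<Longrightarrow> x = y"
proof (rule ccontr)
  assume "\<phi> x = \<phi> y" "x \<noteq> y"
  then have "\<phi> (x - y) * \<phi> (inverse (x - y)) = 0" by (simp add: phi_diff)
  then have "\<phi> ((x - y) * inverse (x - y)) = 0" by (simp only: phi_mult)
  with \<open>x \<noteq> y\<close> have "\<phi> 1 = 0" by simp
  then show False using phi1 by simp
qed
lemma phi_mult_sum: "\<phi> c * (\<Sum>i\<in>I. \<phi> (f i) * s i) = (\<Sum>i\<in>I. \<phi> (c * f i) * s i)"
  by (simp add: sum_distrib_left phi_mult mult.assoc)
end


fun vprod :: "nat \<Rightarrow> (nat \<Rightarrow> 'a::comm_ring_1) \<Rightarrow> 'a" where
  "vprod 0 y = 1"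
| "vprod (Suc k) y = (\<Prod>j\<in>{1..Suc k}. y j - y 0) * vprod k (\<lambda>j. y (Suc j))"

lemma vand:
  fixes D :: "'k::field set"
  assumes D: "subring_of D"
  shows "degree F \<le> k \<Longrightarrow> (\<forall>j\<le>k. y j \<in> D) \<Longrightarrow> (\<forall>j\<le>k. poly F (y j) \<in> D)
      \<Longrightarrow> coeff F k * vprod k y \<in> D"
proof (induction k arbitrary: F y)
  case 0
  then have "poly F (y 0) = coeff F 0" by (simp add: poly_altdef)
  with 0 show ?case by auto
next
  case (Suc k)
  define Q where "Q = synthetic_div F (y 0)"
  have F: "poly F x = (x - y 0) * poly Q x + poly F (y 0)" for x
  proof -
    have "poly ([:-(y 0), 1:] * Q + [:poly F (y 0):]) x = poly F x"
      unfolding Q_def by (subst synthetic_div_correct') simp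
    then show ?thesis by (simp add: algebra_simps)
  qed
  have degQ: "degree Q \<le> k" unfolding Q_def using Suc.prems(1) by (simp add: degree_synthetic_div)
  have cQ: "coeff Q k = coeff F (Suc k)"
  proof -
    have "coeff (F + smult (y 0) Q) (Suc k) = coeff (pCons (poly F (y 0)) Q) (Suc k)"
      unfolding Q_def by (subst synthetic_div_correct) simp
    moreover have "coeff Q (Suc k) = 0" using degQ by (simp add: coeff_eq_0)
    ultimately show ?thesis by simp
  qed
  define c' where "c' = (\<Prod>j\<in>{1..Suc k}. y j - y 0)"
  have "coeff (smult c' Q) k * vprod k (\<lambda>j. y (Suc j)) \<in> D"
  proof (rule Suc.IH)
    show "degree (smult c' Q) \<le> k" using degQ degree_smult_le order_trans by blast
    show "\<forall>j\<le>k. y (Suc j) \<in> D" using Suc.prems(2) by auto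
    show "\<forall>j\<le>k. poly (smult c' Q) (y (Suc j)) \<in> D"
    proof (intro allI impI)
      fix j assume j: "j \<le> k"
      have mem: "Suc j \<in> {1..Suc k}" using j by simp
      have c'eq: "c' = (y (Suc j) - y 0) * (\<Prod>i\<in>{1..Suc k} - {Suc j}. y i - y 0)"
        unfolding c'_def by (rule prod.remove[OF _ mem]) simp
      have "poly (smult c' Q) (y (Suc j)) =
          ((y (Suc j) - y 0) * poly Q (y (Suc j))) * (\<Prod>i\<in>{1..Suc k} - {Suc j}. y i - y 0)"
        by (simp add: c'eq algebra_simps)
      also have "\<dots> = (poly F (y (Suc j)) - poly F (y 0)) * (\<Prod>i\<in>{1..Suc k} - {Suc j}. y i - y 0)"
        using F[of "y (Suc j)"] by simp
      also have "\<dots> \<in> D"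
        using Suc.prems(2,3) j
        by (intro sr_mult[OF D] sr_diff[OF D] sr_prod[OF D]) auto
      finally show "poly (smult c' Q) (y (Suc j)) \<in> D" .
    qed
  qed
  then show ?case by (simp add: cQ c'_def mult.commute mult.left_commute)
qed

lemma vprod_hom:
  fixes h :: "'a::comm_ring_1 \<Rightarrow> 'b::comm_ring_1"
  assumes h1: "h 1 = 1" and hm: "\<And>x y. h (x * y) = h x * h y" and hd: "\<And>x y. h (x - y) = h x - h y"
  shows "h (vprod k y) = vprod k (\<lambda>j. h (y j))"
proof (induction k arbitrary: y)
  case 0 then show ?case by (simp add: h1)
next
  case (Suc k)
  have hp: "h (prod f I) = (\<Prod>i\<in>I. h (f i))" for f and I :: "nat set"
    by (induction I rule: infinite_finite_induct) (auto simp: h1 hm)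
  show ?case by (simp add: hm hp hd Suc.IH)
qed

fun vn :: "nat \<Rightarrow> nat" where
  "vn 0 = 1" | "vn (Suc k) = fact (Suc k) * vn k"

lemma vn_pos: "vn k > 0" by (induction k) auto

lemma prod_fact: "(\<Prod>j\<in>{1..k}. (of_nat j :: 'a::comm_ring_1)) = of_nat (fact k)"
  by (simp add: fact_prod)

lemma vprod_nat: "vprod k (\<lambda>j. (of_nat (j + m) :: 'a::comm_ring_1)) = of_nat (vn k)"
proof (induction k arbitrary: m)
  case 0 then show ?case by simp
next
  case (Suc k)
  have "(\<Prod>j\<in>{1..Suc k}. (of_nat (j + m) :: 'a) - of_nat (0 + m)) = (\<Prod>j\<in>{1..Suc k}. of_nat j)"
    by (simp add: of_nat_add)
  also have "\<dots> = of_nat (fact (Suc k))" by (rule prod_fact)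
  finally have 1: "(\<Prod>j\<in>{1..Suc k}. (of_nat (j + m) :: 'a) - of_nat (0 + m)) = of_nat (fact (Suc k))" .
  have 2: "vprod k (\<lambda>j. (of_nat (Suc j + m) :: 'a)) = of_nat (vn k)"
    using Suc.IH[of "Suc m"] by simp
  have 3: "vprod (Suc k) (\<lambda>j. (of_nat (j + m) :: 'a)) =
     (\<Prod>j\<in>{1..Suc k}. (of_nat (j + m) :: 'a) - of_nat (0 + m)) * vprod k (\<lambda>j. (of_nat (Suc j + m) :: 'a))"
    by (simp only: vprod.simps)
  show ?case unfolding 3 1 2 by simp
qed


definition intpoly :: "'a::comm_ring_1 poly \<Rightarrow> bool" where
  "intpoly p \<longleftrightarrow> (\<forall>u. coeff p u \<in> \<int>)"

lemma intpoly_1: "intpoly 1" by (auto simp: intpoly_def coeff_1)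
lemma intpoly_monom: "intpoly (monom 1 n)" by (auto simp: intpoly_def coeff_monom)
lemma intpoly_diff: "intpoly p \<Longrightarrow> intpoly q \<Longrightarrow> intpoly (p - q)"
  by (auto simp: intpoly_def)
lemma intpoly_mult: "intpoly p \<Longrightarrow> intpoly q \<Longrightarrow> intpoly (p * q)"
  unfolding intpoly_def coeff_mult by (auto intro!: Ints_sum Ints_mult)
lemma intpoly_prod: "(\<And>i. i \<in> I \<Longrightarrow> intpoly (f i)) \<Longrightarrow> intpoly (prod f I)"
  by (induction I rule: infinite_finite_induct) (auto simp: intpoly_1 intpoly_mult)
lemma intpoly_vprod: "(\<And>j. intpoly (y j)) \<Longrightarrow> intpoly (vprod k y)"
proof (induction k arbitrary: y)
  case 0 then show ?case by (simp add: intpoly_1)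
next
  case (Suc k) then show ?case by (auto intro!: intpoly_mult intpoly_prod intpoly_diff)
qed

definition Tp :: "nat \<Rightarrow> nat \<Rightarrow> 'k::field poly" where
  "Tp k m = vprod k (\<lambda>j. monom 1 (j + m))"

lemma Tp_int: "intpoly (Tp k m)"
  unfolding Tp_def by (rule intpoly_vprod) (rule intpoly_monom)

lemma Tp_poly: "poly (Tp k m) r = vprod k (\<lambda>j. r ^ (j + m))"
proof -
  have "poly (Tp k m) r = vprod k (\<lambda>j. poly (monom 1 (j + m)) r)"
    unfolding Tp_def by (rule vprod_hom) auto
  then show ?thesis by (simp add: poly_monom)
qed

lemma lead_monom_diff:
  assumes "b < a"
  shows "lead_coeff (monom (1::'k::field) a - monom 1 b) = 1"
proof -
  have "monom (1::'k) a - monom 1 b = - monom 1 b + monom 1 a" by simp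
  moreover have "lead_coeff (- monom (1::'k) b + monom 1 a) = 1"
    using assms by (subst lead_coeff_add_le) (auto simp: degree_monom_eq)
  ultimately show ?thesis by simp
qed

lemma Tp_lead: "lead_coeff (Tp k m :: 'k::field poly) = 1"
proof (induction k arbitrary: m)
  case 0 then show ?case by (simp add: Tp_def)
next
  case (Suc k)
  have eq: "Tp (Suc k) m = (\<Prod>j\<in>{1..Suc k}. monom (1::'k) (j + m) - monom 1 (0 + m)) * Tp k (Suc m)"
    unfolding Tp_def by simp
  have "lead_coeff (\<Prod>j\<in>{1..Suc k}. monom (1::'k) (j + m) - monom 1 (0 + m)) = 1"
    unfolding lead_coeff_prod proof (rule prod.neutral, rule ballI)
      fix j assume "j \<in> {1..Suc k}"
      then show "lead_coeff (monom (1::'k) (j + m) - monom 1 (0 + m)) = 1"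
        by (intro lead_monom_diff) auto
    qed
  then show ?case unfolding eq lead_coeff_mult using Suc.IH by simp
qed


lemma poly_over_Int_D:
  assumes D: "subring_of D" and f: "f \<in> poly_over D" and d: "d \<in> D"
  shows "poly f d \<in> D"
  unfolding poly_altdef using f d
  by (intro sr_sum[OF D] sr_mult[OF D] sr_power[OF D]) (auto simp: poly_over_def)

lemma get_ell:
  fixes D :: "'k::field set"
  assumes D: "subring_of D" and ne: "Int_D D \<noteq> poly_over D"
  shows "\<exists>lc c (T::'k poly). lc \<notin> D \<and> c > 0 \<and> lc * of_nat c \<in> D \<and> intpoly T \<and> lead_coeff T = 1
           \<and> (\<forall>r\<in>D. lc * poly T r \<in> D)"
proof -
  have sub: "poly_over D \<subseteq> Int_D D"
    using poly_over_Int_D[OF D] by (auto simp: Int_D_def)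
  with ne obtain f0 where "f0 \<in> Int_D D - poly_over D" by blast
  then obtain f where f: "f \<in> Int_D D - poly_over D"
    and fmin: "\<And>g. g \<in> Int_D D - poly_over D \<Longrightarrow> degree f \<le> degree g"
    using ex_has_least_nat[of "\<lambda>g. g \<in> Int_D D - poly_over D" f0 degree] by blast
  define k where "k = degree f"
  define lc where "lc = coeff f k"
  have fD: "\<And>d. d \<in> D \<Longrightarrow> poly f d \<in> D" using f by (auto simp: Int_D_def)
  have lnD: "lc \<notin> D"
  proof
    assume lD: "lc \<in> D"
    define f' where "f' = f - monom lc k"
    have "f' \<in> Int_D D"
      using fD lD by (auto simp: Int_D_def f'_def poly_monom intro!: sr_diff[OF D] sr_mult[OF D] sr_power[OF D])
    moreover have "f' \<notin> poly_over D"
    proof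
      assume f'p: "f' \<in> poly_over D"
      have "f \<in> poly_over D"
        unfolding poly_over_def
      proof (rule CollectI, rule allI)
        fix i
        have "coeff f i = coeff f' i + coeff (monom lc k) i" by (simp add: f'_def)
        moreover have "coeff (monom lc k) i \<in> D" using lD sr0[OF D] by (simp add: coeff_monom)
        ultimately show "coeff f i \<in> D" using f'p sr_add[OF D] by (auto simp: poly_over_def)
      qed
      with f show False by blast
    qed
    ultimately have "degree f \<le> degree f'" using fmin by blast
    moreover have "f' \<noteq> 0" using \<open>f' \<notin> poly_over D\<close> sr0[OF D] by (auto simp: poly_over_def)
    moreover have "degree f' \<le> k"
      unfolding f'_def k_def by (meson degree_diff_le degree_monom_le le_refl)
    moreover have "coeff f' k = 0" by (simp add: f'_def lc_def)
    ultimately show False unfolding k_def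
      by (metis le_antisym leading_coeff_0_iff)
  qed
  have c: "lc * of_nat (vn k) \<in> D"
  proof -
    have "coeff f k * vprod k (\<lambda>j. (of_nat (j + 0) :: 'k)) \<in> D"
      by (rule vand[OF D]) (auto simp: k_def sr_of_nat[OF D] fD)
    then show ?thesis by (simp only: vprod_nat lc_def)
  qed
  have T: "\<forall>r\<in>D. lc * poly (Tp k 0) r \<in> D"
  proof
    fix r assume r: "r \<in> D"
    have "coeff f k * vprod k (\<lambda>j. r ^ (j + 0)) \<in> D"
      by (rule vand[OF D]) (auto simp: k_def sr_power[OF D r] fD)
    then show "lc * poly (Tp k 0) r \<in> D" by (simp only: Tp_poly lc_def)
  qed
  show ?thesis using lnD c T vn_pos Tp_int Tp_lead by blast
qed


locale goodctx =
  fixes D :: "'k::field set" and lc :: 'k and c :: nat and T :: "'k poly" and S :: nat and g :: "nat \<Rightarrow> 'k"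
  assumes D: "subring_of D" and lcD: "lc \<notin> D" and cpos: "c > 0" and cD: "lc * of_nat c \<in> D"
    and Tint: "intpoly T" and Tlead: "lead_coeff T = 1" and TD: "\<forall>r\<in>D. lc * poly T r \<in> D"
    and gD: "\<forall>i<S. g i \<in> D"
begin

definition "t = degree T"
definition "Bset = PiE {..<S} (\<lambda>_. {..<t})"
definition "gmon \<beta> = (\<Prod>i<S. g i ^ \<beta> i)"
definition "E = (\<lambda>n. \<Sum>\<beta>\<in>Bset. of_nat (n \<beta>) * gmon \<beta>) ` PiE Bset (\<lambda>_. {..<c})"
definition "Good x \<longleftrightarrow> (\<exists>e\<in>E. lc * (x - e) \<in> D)"

lemma tpos: "t > 0"
proof (rule ccontr)
  assume "\<not> t > 0"
  then have "degree T = 0" by (simp add: t_def)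
  then have "poly T 0 = 1" using Tlead by (simp add: poly_altdef)
  then show False using TD sr0[OF D] lcD by force
qed

lemma gmon_D: "gmon \<beta> \<in> D"
  unfolding gmon_def using gD by (intro sr_prod[OF D] sr_power[OF D]) auto

lemma finite_Bset: "finite Bset" unfolding Bset_def by (simp add: finite_PiE)

lemma card_Bset: "card Bset = t ^ S" unfolding Bset_def by (simp add: card_PiE)

lemma finite_E: "finite E" unfolding E_def using finite_Bset by (simp add: finite_PiE)

lemma card_E: "card E \<le> c ^ (t ^ S)"
proof -
  have "card E \<le> card (PiE Bset (\<lambda>_. {..<c}))" unfolding E_def
    by (rule card_image_le) (simp add: finite_PiE finite_Bset)
  also have "\<dots> = c ^ (t ^ S)" using finite_Bset by (simp add: card_PiE card_Bset)
  finally show ?thesis .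
qed

lemma Lrep: "Good (\<Sum>\<beta>\<in>Bset. of_int (n \<beta>) * gmon \<beta>)"
proof -
  define m where "m \<beta> = nat (n \<beta> mod int c)" for \<beta>
  have mem: "restrict m Bset \<in> PiE Bset (\<lambda>_. {..<c})"
    using cpos by (auto simp: m_def nat_less_iff)
  define e where "e = (\<Sum>\<beta>\<in>Bset. of_nat (restrict m Bset \<beta>) * gmon \<beta>)"
  have eE: "e \<in> E" unfolding E_def e_def using mem by blast
  have e': "e = (\<Sum>\<beta>\<in>Bset. of_nat (m \<beta>) * gmon \<beta>)" unfolding e_def by (rule sum.cong) auto
  have "lc * ((\<Sum>\<beta>\<in>Bset. of_int (n \<beta>) * gmon \<beta>) - e)
      = (\<Sum>\<beta>\<in>Bset. (lc * of_nat c) * (of_int (n \<beta> div int c) * gmon \<beta>))"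
  proof -
    have "of_int (n \<beta>) - of_nat (m \<beta>) = of_nat c * (of_int (n \<beta> div int c) :: 'k)" for \<beta>
    proof -
      have "n \<beta> mod int c \<ge> 0" using cpos by simp
      then have "of_nat (m \<beta>) = (of_int (n \<beta> mod int c) :: 'k)" by (simp add: m_def)
      moreover have "n \<beta> = int c * (n \<beta> div int c) + n \<beta> mod int c" by simp
      then have "(of_int (n \<beta>) :: 'k) = of_nat c * of_int (n \<beta> div int c) + of_int (n \<beta> mod int c)"
        by (metis of_int_add of_int_mult of_int_of_nat_eq)
      ultimately show ?thesis by simp
    qed
    then show ?thesis unfolding e' sum_subtractf[symmetric] sum_distrib_left
      by (intro sum.cong refl) (simp add: algebra_simps)
  qed
  also have "\<dots> \<in> D"
  proof (rule sr_sum[OF D])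
    fix \<beta> show "lc * of_nat c * (of_int (n \<beta> div int c) * gmon \<beta>) \<in> D"
      by (rule sr_mult[OF D, OF cD]) (intro sr_mult[OF D] sr_of_int[OF D] gmon_D)
  qed
  finally show ?thesis unfolding Good_def using eE by blast
qed

lemma E_form: "e \<in> E \<Longrightarrow> \<exists>n. e = (\<Sum>\<beta>\<in>Bset. of_int (n \<beta>) * gmon \<beta>)"
proof -
  assume "e \<in> E"
  then obtain m where "e = (\<Sum>\<beta>\<in>Bset. of_nat (m \<beta>) * gmon \<beta>)" unfolding E_def by blast
  then have "e = (\<Sum>\<beta>\<in>Bset. of_int (int (m \<beta>)) * gmon \<beta>)" by simp
  then show ?thesis by (intro exI[of _ "\<lambda>\<beta>. int (m \<beta>)"])
qed

lemma Good_shift: "Good x \<Longrightarrow> lc * (y - x) \<in> D \<Longrightarrow> Good y"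
proof -
  assume "Good x" "lc * (y - x) \<in> D"
  then obtain e where e: "e \<in> E" "lc * (x - e) \<in> D" unfolding Good_def by blast
  have "lc * (y - e) = lc * (y - x) + lc * (x - e)" by (simp add: algebra_simps)
  then have "lc * (y - e) \<in> D" using e \<open>lc * (y - x) \<in> D\<close> sr_add[OF D] by simp
  then show "Good y" unfolding Good_def using e by blast
qed

lemma Good_rep: "Good x \<Longrightarrow> \<exists>n. lc * (x - (\<Sum>\<beta>\<in>Bset. of_int (n \<beta>) * gmon \<beta>)) \<in> D"
  unfolding Good_def using E_form by blast

lemma Good_add: "Good x \<Longrightarrow> Good y \<Longrightarrow> Good (x + y)"
proof -
  assume "Good x" "Good y"
  then obtain n1 n2 where n1: "lc * (x - (\<Sum>\<beta>\<in>Bset. of_int (n1 \<beta>) * gmon \<beta>)) \<in> D"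
    and n2: "lc * (y - (\<Sum>\<beta>\<in>Bset. of_int (n2 \<beta>) * gmon \<beta>)) \<in> D" using Good_rep by blast
  have G: "Good (\<Sum>\<beta>\<in>Bset. of_int (n1 \<beta> + n2 \<beta>) * gmon \<beta>)" by (rule Lrep)
  have "(\<Sum>\<beta>\<in>Bset. of_int (n1 \<beta> + n2 \<beta>) * gmon \<beta>) =
     (\<Sum>\<beta>\<in>Bset. of_int (n1 \<beta>) * gmon \<beta>) + (\<Sum>\<beta>\<in>Bset. of_int (n2 \<beta>) * gmon \<beta>)"
    by (simp add: sum.distrib distrib_right)
  then have "lc * ((x + y) - (\<Sum>\<beta>\<in>Bset. of_int (n1 \<beta> + n2 \<beta>) * gmon \<beta>)) =
     lc * (x - (\<Sum>\<beta>\<in>Bset. of_int (n1 \<beta>) * gmon \<beta>)) + lc * (y - (\<Sum>\<beta>\<in>Bset. of_int (n2 \<beta>) * gmon \<beta>))"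
    by (simp add: algebra_simps)
  then have "lc * ((x + y) - (\<Sum>\<beta>\<in>Bset. of_int (n1 \<beta> + n2 \<beta>) * gmon \<beta>)) \<in> D"
    using n1 n2 sr_add[OF D] by simp
  then show ?thesis using Good_shift[OF G] by simp
qed

lemma Good_intmult: "z \<in> \<int> \<Longrightarrow> Good x \<Longrightarrow> Good (z * x)"
proof -
  assume z: "z \<in> \<int>" and "Good x"
  then obtain zi where zi: "z = of_int zi" by (auto elim: Ints_cases)
  from \<open>Good x\<close> obtain n where n: "lc * (x - (\<Sum>\<beta>\<in>Bset. of_int (n \<beta>) * gmon \<beta>)) \<in> D"
    using Good_rep by blast
  have G: "Good (\<Sum>\<beta>\<in>Bset. of_int (zi * n \<beta>) * gmon \<beta>)" by (rule Lrep)
  have "lc * (z * x - (\<Sum>\<beta>\<in>Bset. of_int (zi * n \<beta>) * gmon \<beta>)) =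
        z * (lc * (x - (\<Sum>\<beta>\<in>Bset. of_int (n \<beta>) * gmon \<beta>)))"
    by (simp add: zi algebra_simps sum_distrib_left sum_subtractf)
  also have "\<dots> \<in> D" using n z sr_mult[OF D] sr_Ints[OF D] by blast
  finally show ?thesis using Good_shift[OF G] by simp
qed

lemma Good_0: "Good 0"
  using Lrep[of "\<lambda>_. 0"] by simp

lemma Good_sum: "(\<And>i. i \<in> I \<Longrightarrow> Good (f i)) \<Longrightarrow> Good (sum f I)"
  by (induction I rule: infinite_finite_induct) (auto simp: Good_0 Good_add)

lemma Good_mono: "\<beta> \<in> Bset \<Longrightarrow> Good (gmon \<beta>)"
proof -
  assume b: "\<beta> \<in> Bset"
  have "(\<Sum>\<beta>'\<in>Bset. of_int (if \<beta>' = \<beta> then 1 else 0) * gmon \<beta>') = gmon \<beta>"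
  proof -
    have "(\<Sum>\<beta>'\<in>Bset. of_int (if \<beta>' = \<beta> then 1 else 0) * gmon \<beta>') = (\<Sum>\<beta>'\<in>Bset. if \<beta>' = \<beta> then gmon \<beta>' else 0)"
      by (rule sum.cong) auto
    also have "\<dots> = gmon \<beta>" using b finite_Bset by (simp add: sum.delta)
    finally show ?thesis .
  qed
  then show ?thesis using Lrep[of "\<lambda>\<beta>'. if \<beta>' = \<beta> then 1 else 0"] by simp
qed

lemma Good_1: "Good 1"
proof -
  have "restrict (\<lambda>_. 0) {..<S} \<in> Bset" using tpos by (auto simp: Bset_def)
  moreover have "gmon (restrict (\<lambda>_. 0) {..<S}) = 1" by (simp add: gmon_def)
  ultimately show ?thesis using Good_mono by metis
qed

end


context goodctx begin

lemma gmon_split: "i < S \<Longrightarrow> gmon \<beta> = g i ^ \<beta> i * (\<Prod>j\<in>{..<S}-{i}. g j ^ \<beta> j)"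
  unfolding gmon_def by (rule prod.remove) auto

lemma Good_gmon_g: assumes b: "\<beta> \<in> Bset" and i: "i < S" shows "Good (gmon \<beta> * g i)"
proof -
  define P where "P = (\<Prod>j\<in>{..<S}-{i}. g j ^ \<beta> j)"
  have Pu: "gmon (\<beta>(i := u)) = g i ^ u * P" for u
  proof -
    have "(\<Prod>j\<in>{..<S}-{i}. g j ^ (\<beta>(i:=u)) j) = P" unfolding P_def by (rule prod.cong) auto
    then show ?thesis unfolding gmon_split[OF i, of "\<beta>(i:=u)"] by simp
  qed
  have PD: "P \<in> D" unfolding P_def using gD by (intro sr_prod[OF D] sr_power[OF D]) auto
  have bi: "\<beta> i < t" using PiE_mem[OF b[unfolded Bset_def], of i] i by simp
  have bu: "\<beta>(i := u) \<in> Bset" if "u < t" for u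
  proof -
    have "\<beta>(i := u) \<in> PiE (insert i {..<S}) (\<lambda>_. {..<t})"
      using that b unfolding Bset_def by (intro PiE_fun_upd) simp_all
    then show ?thesis using i unfolding Bset_def by (simp add: insert_absorb)
  qed
  have gb: "gmon \<beta> * g i = g i ^ Suc (\<beta> i) * P"
    unfolding gmon_split[OF i, of \<beta>] P_def[symmetric] by (simp add: mult_ac)
  show ?thesis
  proof (cases "Suc (\<beta> i) < t")
    case True
    have "Good (gmon (\<beta>(i := Suc (\<beta> i))))" by (rule Good_mono[OF bu[OF True]])
    then show ?thesis unfolding gb Pu .
  next
    case False
    with bi have tS: "t = Suc (\<beta> i)" by simp
    define R where "R = (\<Sum>u<t. coeff T u * gmon (\<beta>(i := u)))"
    have pT: "poly T (g i) = (\<Sum>u<t. coeff T u * g i ^ u) + g i ^ t"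
    proof -
      have "poly T (g i) = (\<Sum>u\<le>t. coeff T u * g i ^ u)" by (simp add: poly_altdef t_def)
      also have "\<dots> = (\<Sum>u<t. coeff T u * g i ^ u) + coeff T t * g i ^ t"
        unfolding tS sum.atMost_Suc lessThan_Suc_atMost by simp
      also have "coeff T t = 1" using Tlead by (simp add: t_def)
      finally show ?thesis by simp
    qed
    have eq: "gmon \<beta> * g i = P * poly T (g i) - R"
      unfolding gb pT R_def Pu by (simp add: tS algebra_simps sum_distrib_left)
    have GR: "Good (- R)"
    proof -
      have "- R = (\<Sum>u<t. (- coeff T u) * gmon (\<beta>(i := u)))"
        unfolding R_def by (simp add: sum_negf)
      also have "Good \<dots>"
        using Tint bu by (intro Good_sum Good_intmult Good_mono) (auto simp: intpoly_def)
      finally show ?thesis .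
    qed
    have "lc * (gmon \<beta> * g i - - R) = P * (lc * poly T (g i))"
      unfolding eq by (simp add: algebra_simps)
    also have "\<dots> \<in> D" using PD TD gD i sr_mult[OF D] by auto
    finally show ?thesis using Good_shift[OF GR] by simp
  qed
qed

lemma Good_mult_g: assumes x: "Good x" and i: "i < S" shows "Good (x * g i)"
proof -
  obtain n where n: "lc * (x - (\<Sum>\<beta>\<in>Bset. of_int (n \<beta>) * gmon \<beta>)) \<in> D"
    using Good_rep[OF x] by blast
  have G: "Good ((\<Sum>\<beta>\<in>Bset. of_int (n \<beta>) * gmon \<beta>) * g i)"
    unfolding sum_distrib_right mult.assoc
    using i by (intro Good_sum Good_intmult Good_gmon_g) auto
  have "lc * (x * g i - (\<Sum>\<beta>\<in>Bset. of_int (n \<beta>) * gmon \<beta>) * g i) =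
        (lc * (x - (\<Sum>\<beta>\<in>Bset. of_int (n \<beta>) * gmon \<beta>))) * g i"
    by (simp add: algebra_simps)
  also have "\<dots> \<in> D" using n gD i sr_mult[OF D] by auto
  finally show ?thesis using Good_shift[OF G] by simp
qed

definition "Gen = insert 0 (insert 1 (g ` {..<S}))"

lemma Good_mult_gen: "Good x \<Longrightarrow> y \<in> Gen \<Longrightarrow> Good (x * y)"
  unfolding Gen_def using Good_mult_g Good_0 by auto

lemma Good_gen: "y \<in> Gen \<Longrightarrow> Good y"
  using Good_mult_gen[OF Good_1] by simp

lemma Gen_D: "y \<in> Gen \<Longrightarrow> y \<in> D"
  unfolding Gen_def using gD sr0[OF D] sr1[OF D] by auto

end


primrec vseq :: "(nat \<Rightarrow> nat \<Rightarrow> 'k::comm_ring_1) \<Rightarrow> (nat \<Rightarrow> 'k) \<Rightarrow> nat \<Rightarrow> nat \<Rightarrow> nat \<Rightarrow> 'k" where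
  "vseq \<gamma> \<delta> r 0 l = \<delta> l"
| "vseq \<gamma> \<delta> r (Suc j) l = (\<Sum>k<r. vseq \<gamma> \<delta> r j k * \<gamma> k l)"

lemma power_step_A:
  fixes \<phi> :: "'k::field \<Rightarrow> 'b::ring_1"
  assumes cm: "central_alg_map \<phi>" and Asub: "subring_of A" and aA: "a \<in> A"
    and lA: "\<phi> lc * (a ^ j2 - a ^ j1) \<in> A" and j: "j1 < j2" "j2 \<le> N"
  shows "\<phi> lc * (a ^ (N + fact N) - a ^ N) \<in> A"
proof -
  define \<Delta> where "\<Delta> = j2 - j1"
  have dpos: "\<Delta> > 0" and dle: "\<Delta> \<le> N" using j by (auto simp: \<Delta>_def)
  have "\<Delta> dvd fact N" using dvd_fact[of \<Delta> N] dpos dle by simp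
  then obtain q where q: "fact N = \<Delta> * q" by (elim dvdE)
  have j2eq: "j2 = j1 + \<Delta>" using j by (simp add: \<Delta>_def)
  have aP: "a ^ m \<in> A" for m using aA Asub by (simp add: sr_power)
  have step: "\<phi> lc * (a ^ (j1 + q' * \<Delta>) - a ^ j1) \<in> A" for q'
  proof (induction q')
    case 0 then show ?case using sr0[OF Asub] by simp
  next
    case (Suc q')
    define X where "X = a ^ (j1 + q' * \<Delta>)"
    define Y where "Y = a ^ j1"
    define Z where "Z = a ^ \<Delta>"
    have e1: "a ^ (j1 + Suc q' * \<Delta>) = X * Z" unfolding X_def Z_def
      by (metis power_add add.assoc add.commute mult_Suc)
    have e2: "a ^ (j1 + \<Delta>) = Y * Z" unfolding Y_def Z_def by (simp add: power_add)
    have "\<phi> lc * (X * Z - Y) = (\<phi> lc * (X - Y)) * Z + \<phi> lc * (Y * Z - Y)"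
      by (simp add: right_diff_distrib left_diff_distrib mult.assoc)
    then have "\<phi> lc * (a ^ (j1 + Suc q' * \<Delta>) - a ^ j1) =
        (\<phi> lc * (a ^ (j1 + q' * \<Delta>) - a ^ j1)) * a ^ \<Delta> + \<phi> lc * (a ^ (j1 + \<Delta>) - a ^ j1)"
      unfolding e1 e2 by (simp add: X_def Y_def Z_def)
    also have "\<dots> \<in> A" using Suc.IH lA aP j2eq sr_add[OF Asub] sr_mult[OF Asub] by simp
    finally show ?case .
  qed
  have "\<phi> lc * (a ^ (N + fact N) - a ^ N) = (\<phi> lc * (a ^ (j1 + q * \<Delta>) - a ^ j1)) * a ^ (N - j1)"
  proof -
    have "N + fact N = (j1 + q * \<Delta>) + (N - j1)" using j q by (simp add: mult.commute)
    moreover have "N = j1 + (N - j1)" using j by simp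
    ultimately have "a ^ (N + fact N) - a ^ N = (a ^ (j1 + q * \<Delta>) - a ^ j1) * a ^ (N - j1)"
      by (metis power_add left_diff_distrib)
    then show ?thesis by (simp add: mult.assoc)
  qed
  also have "\<dots> \<in> A" using step aP sr_mult[OF Asub] by blast
  finally show ?thesis .
qed

context goodctx begin

lemma core:
  fixes \<phi> :: "'k \<Rightarrow> 'b::ring_1" and A :: "'b set"
  assumes cm: "central_alg_map \<phi>" and Asub: "subring_of A" and phiA: "\<phi> ` D \<subseteq> A"
    and aA: "a \<in> A" and r: "r \<le> R" and sA: "\<forall>l<r. s l \<in> A"
    and gam: "\<forall>k<r. \<forall>l<r. \<gamma> k l \<in> Gen" and del: "\<forall>l<r. \<delta> l \<in> Gen"
    and one: "1 = (\<Sum>l<r. \<phi> (\<delta> l) * s l)"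
    and act: "\<forall>k<r. a * s k = (\<Sum>l<r. \<phi> (\<gamma> k l) * s l)"
  shows "\<phi> lc * (a ^ ((c ^ (t ^ S)) ^ R + fact ((c ^ (t ^ S)) ^ R)) - a ^ ((c ^ (t ^ S)) ^ R)) \<in> A"
proof -
  define N where "N = (c ^ (t ^ S)) ^ R"
  define v where "v = vseq \<gamma> \<delta> r"
  have pow: "a ^ j = (\<Sum>l<r. \<phi> (v j l) * s l)" for j
  proof (induction j)
    case 0 then show ?case using one by (simp add: v_def)
  next
    case (Suc j)
    have "a ^ Suc j = a * (\<Sum>k<r. \<phi> (v j k) * s k)" using Suc.IH by simp
    also have "\<dots> = (\<Sum>k<r. \<phi> (v j k) * (a * s k))"
      unfolding sum_distrib_left
      by (rule sum.cong) (simp_all add: mult.assoc[symmetric] phi_comm[OF cm, of _ a])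
    also have "\<dots> = (\<Sum>k<r. \<Sum>l<r. \<phi> (v j k * \<gamma> k l) * s l)"
      using act by (simp add: sum_distrib_left phi_mult[OF cm] mult.assoc)
    also have "\<dots> = (\<Sum>l<r. \<Sum>k<r. \<phi> (v j k * \<gamma> k l) * s l)" by (rule sum.swap)
    also have "\<dots> = (\<Sum>l<r. \<phi> (v (Suc j) l) * s l)"
      by (simp add: v_def phi_sum[OF cm] sum_distrib_right)
    finally show ?case .
  qed
  have good: "\<forall>l<r. Good (v j l)" for j
  proof (induction j)
    case 0 then show ?case using del Good_gen by (simp add: v_def)
  next
    case (Suc j)
    then show ?case using gam by (auto simp: v_def intro!: Good_sum Good_mult_gen)
  qed
  define f where "f j = restrict (\<lambda>l. SOME e. e \<in> E \<and> lc * (v j l - e) \<in> D) {..<r}" for j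
  have fprop: "f j l \<in> E \<and> lc * (v j l - f j l) \<in> D" if "l < r" for j l
  proof -
    have "\<exists>e. e \<in> E \<and> lc * (v j l - e) \<in> D" using good[of j] that by (auto simp: Good_def)
    then have "(SOME e. e \<in> E \<and> lc * (v j l - e) \<in> D) \<in> E \<and> lc * (v j l - (SOME e. e \<in> E \<and> lc * (v j l - e) \<in> D)) \<in> D"
      by (rule someI_ex)
    then show ?thesis unfolding f_def using that by simp
  qed
  have fimg: "f ` {..N} \<subseteq> PiE {..<r} (\<lambda>_. E)"
  proof
    fix x assume "x \<in> f ` {..N}"
    then obtain j where "x = f j" by blast
    moreover have "f j \<in> PiE {..<r} (\<lambda>_. E)"
      unfolding f_def restrict_PiE_iff using fprop unfolding f_def by auto
    ultimately show "x \<in> PiE {..<r} (\<lambda>_. E)" by simp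
  qed
  have cardP: "card (PiE {..<r} (\<lambda>_. E)) \<le> N"
  proof -
    have "card (PiE {..<r} (\<lambda>_. E)) = card E ^ r" by (simp add: card_PiE)
    also have "\<dots> \<le> (c ^ (t ^ S)) ^ r" by (rule power_mono[OF card_E]) simp
    also have "\<dots> \<le> (c ^ (t ^ S)) ^ R" using cpos r by (intro power_increasing) auto
    finally show ?thesis by (simp add: N_def)
  qed
  have "\<not> inj_on f {..N}"
  proof
    assume "inj_on f {..N}"
    then have "card (f ` {..N}) = N + 1" by (simp add: card_image)
    moreover have "card (f ` {..N}) \<le> N"
      using card_mono[OF _ fimg] cardP finite_E by (simp add: finite_PiE)
    ultimately show False by simp
  qed
  then obtain j1 j2 where jj: "j1 \<le> N" "j2 \<le> N" "j1 \<noteq> j2" "f j1 = f j2"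
    unfolding inj_on_def by auto
  have main: "\<phi> lc * (a ^ j2 - a ^ j1) \<in> A" if "f j1 = f j2" for j1 j2
  proof -
    have d: "lc * (v j2 l - v j1 l) \<in> D" if "l < r" for l
    proof -
      have "lc * (v j2 l - v j1 l) = lc * (v j2 l - f j2 l) - lc * (v j1 l - f j1 l)"
        using \<open>f j1 = f j2\<close> by (simp add: algebra_simps)
      then show ?thesis using fprop[OF that] sr_diff[OF D] by simp
    qed
    have "\<phi> lc * (a ^ j2 - a ^ j1) = (\<Sum>l<r. \<phi> (lc * (v j2 l - v j1 l)) * s l)"
      unfolding pow sum_subtractf[symmetric] phi_mult_sum[OF cm, symmetric]
      by (simp add: phi_diff[OF cm] phi_mult[OF cm] left_diff_distrib right_diff_distrib sum_subtractf)
    also have "\<dots> \<in> A" using d sA phiA by (intro sr_sum[OF Asub] sr_mult[OF Asub]) auto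
    finally show ?thesis .
  qed
  show ?thesis
  proof (cases "j1 < j2")
    case True
    show ?thesis using power_step_A[OF cm Asub aA main[OF jj(4)] True jj(2)] by (simp add: N_def)
  next
    case False
    then have "j2 < j1" using jj(3) by simp
    then show ?thesis using power_step_A[OF cm Asub aA main[OF jj(4)[symmetric]] _ jj(1)] by (simp add: N_def)
  qed
qed

end


lemma peval_monom_diff:
  fixes \<phi> :: "'k::field \<Rightarrow> 'b::ring_1"
  assumes cm: "central_alg_map \<phi>" and lc: "lc \<noteq> 0" and NM: "N < M"
  shows "peval \<phi> (monom lc M - monom lc N) a = \<phi> lc * a ^ M - \<phi> lc * a ^ N"
proof -
  have deg: "degree (monom lc M - monom lc N) = M"
  proof -
    have "monom lc M - monom lc N = - monom lc N + monom lc M" by simp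
    moreover have "degree (- monom lc N + monom lc M) = M"
      using NM lc by (subst degree_add_eq_right) (auto simp: degree_monom_eq)
    ultimately show ?thesis by simp
  qed
  have "peval \<phi> (monom lc M - monom lc N) a =
      (\<Sum>i\<le>M. (if i = M then \<phi> lc * a ^ i else 0) - (if i = N then \<phi> lc * a ^ i else 0))"
    unfolding peval_def deg
    by (rule sum.cong) (auto simp: coeff_monom phi_diff[OF cm] phi0[OF cm] left_diff_distrib)
  also have "\<dots> = \<phi> lc * a ^ M - \<phi> lc * a ^ N"
    using NM by (simp add: sum_subtractf sum.delta)
  finally show ?thesis .
qed

lemma hard:
  fixes D :: "'k::field set" and \<phi> :: "'k \<Rightarrow> 'b::ring_1" and A :: "'b set" and R c :: nat
  assumes D: "subring_of D" and cm: "central_alg_map \<phi>" and Asub: "subring_of A"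
    and phiA: "\<phi> ` D \<subseteq> A"
    and lcD: "lc \<notin> D" and cpos: "c > 0" and cD: "lc * of_nat c \<in> D"
    and Tint: "intpoly T" and Tlead: "lead_coeff T = 1" and TD: "\<forall>r\<in>D. lc * poly T r \<in> D"
    and rep: "\<forall>a\<in>A. \<exists>r s \<gamma> \<delta> g. r \<le> R \<and> (\<forall>i<R*R+R. g i \<in> D) \<and> (\<forall>l<r. s l \<in> A)
       \<and> (\<forall>k<r. \<forall>l<r. \<gamma> k l \<in> insert 0 (insert 1 (g ` {..<R*R+R})))
       \<and> (\<forall>l<r. \<delta> l \<in> insert 0 (insert 1 (g ` {..<R*R+R})))
       \<and> 1 = (\<Sum>l<r. \<phi> (\<delta> l) * s l) \<and> (\<forall>k<r. a * s k = (\<Sum>l<r. \<phi> (\<gamma> k l) * s l))"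
  shows "Int_K \<phi> A \<noteq> poly_over D"
proof -
  define N where "N = (c ^ (degree T ^ (R*R+R))) ^ R"
  define h where "h = monom lc (N + fact N) - monom lc N"
  have lc0: "lc \<noteq> 0" using lcD sr0[OF D] by auto
  have NM: "N < N + fact N" by (simp add: fact_gt_zero)
  have "h \<in> Int_K \<phi> A"
    unfolding Int_K_def
  proof (rule CollectI, rule ballI)
    fix a assume aA: "a \<in> A"
    from rep aA obtain r s \<gamma> \<delta> g where r: "r \<le> R" and gD: "\<forall>i<R*R+R. g i \<in> D"
      and sA: "\<forall>l<r. s l \<in> A"
      and gam: "\<forall>k<r. \<forall>l<r. \<gamma> k l \<in> insert 0 (insert 1 (g ` {..<R*R+R}))"
      and del: "\<forall>l<r. \<delta> l \<in> insert 0 (insert 1 (g ` {..<R*R+R}))"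
      and one: "1 = (\<Sum>l<r. \<phi> (\<delta> l) * s l)"
      and act: "\<forall>k<r. a * s k = (\<Sum>l<r. \<phi> (\<gamma> k l) * s l)" by blast
    interpret G: goodctx D lc c T "R*R+R" g
      using D lcD cpos cD Tint Tlead TD gD by unfold_locales auto
    have Geq: "G.Gen = insert 0 (insert 1 (g ` {..<R*R+R}))" by (simp add: G.Gen_def)
    have "\<phi> lc * (a ^ ((c ^ (G.t ^ (R*R+R))) ^ R + fact ((c ^ (G.t ^ (R*R+R))) ^ R)) - a ^ ((c ^ (G.t ^ (R*R+R))) ^ R)) \<in> A"
      by (rule G.core[OF cm Asub phiA aA r sA]) (use gam del one act Geq in auto)
    then have "\<phi> lc * (a ^ (N + fact N) - a ^ N) \<in> A" by (simp add: N_def G.t_def)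
    then show "peval \<phi> h a \<in> A"
      unfolding h_def peval_monom_diff[OF cm lc0 NM] by (simp add: right_diff_distrib)
  qed
  moreover have "h \<notin> poly_over D"
  proof
    assume "h \<in> poly_over D"
    then have "coeff h (N + fact N) \<in> D" by (simp add: poly_over_def)
    then show False using lcD NM by (simp add: h_def coeff_monom)
  qed
  ultimately show ?thesis by blast
qed


lemma sub1:
  fixes \<phi> :: "'k::field \<Rightarrow> 'b::ring_1"
  assumes Asub: "subring_of A" and phiA: "\<phi> ` D \<subseteq> A"
  shows "poly_over D \<subseteq> Int_K \<phi> A"
proof
  fix f assume f: "f \<in> poly_over D"
  show "f \<in> Int_K \<phi> A" unfolding Int_K_def peval_def
    using f phiA by (auto simp: poly_over_def intro!: sr_sum[OF Asub] sr_mult[OF Asub] sr_power[OF Asub])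
qed

lemma sub2:
  fixes \<phi> :: "'k::field \<Rightarrow> 'b::ring_1"
  assumes cm: "central_alg_map \<phi>" and phiA: "\<phi> ` D \<subseteq> A" and DA: "{k. \<phi> k \<in> A} = D"
  shows "Int_K \<phi> A \<subseteq> Int_D D"
proof
  fix f assume f: "f \<in> Int_K \<phi> A"
  show "f \<in> Int_D D" unfolding Int_D_def
  proof (rule CollectI, rule ballI)
    fix d assume d: "d \<in> D"
    have "peval \<phi> f (\<phi> d) = \<phi> (poly f d)"
      unfolding peval_def poly_altdef phi_sum[OF cm] by (simp add: phi_mult[OF cm] phi_power[OF cm])
    moreover have "peval \<phi> f (\<phi> d) \<in> A" using f d phiA by (auto simp: Int_K_def)
    ultimately have "\<phi> (poly f d) \<in> A" by simp
    then show "poly f d \<in> D" using DA by blast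
  qed
qed

definition repprop :: "('k::field \<Rightarrow> 'b::ring_1) \<Rightarrow> 'k set \<Rightarrow> 'b set \<Rightarrow> nat \<Rightarrow> bool" where
  "repprop \<phi> D A R \<longleftrightarrow> (\<forall>a\<in>A. \<exists>r s \<gamma> \<delta> g. r \<le> R \<and> (\<forall>i<R*R+R. g i \<in> D) \<and> (\<forall>l<r. s l \<in> A)
       \<and> (\<forall>k<r. \<forall>l<r. \<gamma> k l \<in> insert 0 (insert 1 (g ` {..<R*R+R})))
       \<and> (\<forall>l<r. \<delta> l \<in> insert 0 (insert 1 (g ` {..<R*R+R})))
       \<and> 1 = (\<Sum>l<r. \<phi> (\<delta> l) * s l) \<and> (\<forall>k<r. a * s k = (\<Sum>l<r. \<phi> (\<gamma> k l) * s l)))"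

lemma rep_bd:
  fixes \<phi> :: "'k::field \<Rightarrow> 'b::ring_1"
  assumes cm: "central_alg_map \<phi>" and Asub: "subring_of A" and D: "subring_of D"
    and bd: "\<forall>a\<in>A. \<exists>p. p \<in> poly_over D \<and> lead_coeff p = 1 \<and> degree p \<le> n \<and> peval \<phi> p a = 0"
  shows "repprop \<phi> D A n"
  unfolding repprop_def
proof
  fix a assume aA: "a \<in> A"
  from bd aA obtain p where p: "p \<in> poly_over D" "lead_coeff p = 1" "degree p \<le> n" "peval \<phi> p a = 0"
    by blast
  define m where "m = degree p"
  have m0: "m > 0"
  proof (rule ccontr)
    assume "\<not> m > 0"
    then have "m = 0" by simp
    then have "peval \<phi> p a = \<phi> 1" using p(2) by (simp add: peval_def m_def)
    then show False using p(4) phi1[OF cm] by simp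
  qed
  have am: "a ^ m = (\<Sum>l<m. \<phi> (- coeff p l) * a ^ l)"
  proof -
    have "0 = (\<Sum>i\<le>m. \<phi> (coeff p i) * a ^ i)" using p(4) by (simp add: peval_def m_def)
    also have "\<dots> = (\<Sum>i<m. \<phi> (coeff p i) * a ^ i) + a ^ m"
      using m0 p(2) phi1[OF cm]
      by (simp add: m_def lessThan_Suc_atMost[symmetric] del: lessThan_Suc_atMost)
    finally have "a ^ m = - (\<Sum>i<m. \<phi> (coeff p i) * a ^ i)" by (simp add: eq_neg_iff_add_eq_0 add.commute)
    also have "\<dots> = (\<Sum>l<m. \<phi> (- coeff p l) * a ^ l)"
      by (simp add: phi_uminus[OF cm] sum_negf)
    finally show ?thesis .
  qed
  define \<delta> where "\<delta> l = (if l = 0 then 1 else 0 :: 'k)" for l :: nat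
  define \<gamma> where "\<gamma> k l = (if Suc k < m then (if l = Suc k then 1 else 0) else - coeff p l)" for k l :: nat
  define g where "g i = - coeff p i" for i :: nat
  show "\<exists>r s \<gamma> \<delta> g. r \<le> n \<and> (\<forall>i<n*n+n. g i \<in> D) \<and> (\<forall>l<r. s l \<in> A)
       \<and> (\<forall>k<r. \<forall>l<r. \<gamma> k l \<in> insert 0 (insert 1 (g ` {..<n*n+n})))
       \<and> (\<forall>l<r. \<delta> l \<in> insert 0 (insert 1 (g ` {..<n*n+n})))
       \<and> 1 = (\<Sum>l<r. \<phi> (\<delta> l) * s l) \<and> (\<forall>k<r. a * s k = (\<Sum>l<r. \<phi> (\<gamma> k l) * s l))"
  proof -
    have h1: "m \<le> n" using p(3) by (simp add: m_def)
    have h2: "g i \<in> D" for i :: nat using p(1) by (simp add: g_def poly_over_def sr_uminus[OF D])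
    have h3: "a ^ l \<in> A" for l :: nat using aA by (simp add: sr_power[OF Asub])
    have h4: "\<gamma> k l \<in> insert 0 (insert 1 (g ` {..<n*n+n}))" if "l < m" for k l :: nat
    proof -
      have "l < n*n+n" using that p(3) by (simp add: m_def) 
      then show ?thesis by (auto simp: \<gamma>_def g_def)
    qed
    have h5: "\<delta> l \<in> insert 0 (insert 1 (g ` {..<n*n+n}))" for l :: nat by (simp add: \<delta>_def)
    have h6: "1 = (\<Sum>l<m. \<phi> (\<delta> l) * a ^ l)"
    proof -
      have "(\<Sum>l<m. \<phi> (\<delta> l) * a ^ l) = (\<Sum>l<m. if l = 0 then 1 else 0)"
        by (rule sum.cong) (auto simp: \<delta>_def phi0[OF cm] phi1[OF cm])
      also have "\<dots> = 1" using m0 by (simp add: sum.delta)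
      finally show ?thesis by simp
    qed
    have h7: "a * a ^ k = (\<Sum>l<m. \<phi> (\<gamma> k l) * a ^ l)" if k: "k < m" for k :: nat
    proof (cases "Suc k < m")
      case True
      have "(\<Sum>l<m. \<phi> (\<gamma> k l) * a ^ l) = (\<Sum>l<m. if l = Suc k then a ^ l else 0)"
        by (rule sum.cong) (auto simp: \<gamma>_def True phi0[OF cm] phi1[OF cm])
      also have "\<dots> = a ^ Suc k" using True by (simp add: sum.delta)
      finally show ?thesis by simp
    next
      case False
      with k have "Suc k = m" by simp
      then have "a * a ^ k = a ^ m" by (metis power_Suc)
      also have "\<dots> = (\<Sum>l<m. \<phi> (\<gamma> k l) * a ^ l)" using am False by (simp add: \<gamma>_def)
      finally show ?thesis .
    qed
    show ?thesis
      by (intro exI[of _ m] exI[of _ "\<lambda>l. a ^ l"] exI[of _ \<gamma>] exI[of _ \<delta>] exI[of _ g] conjI allI impI)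
        (use h1 h2 h3 h4 h5 h6 h7 in auto)
  qed
qed


lemma rep_fg:
  fixes \<phi> :: "'k::field \<Rightarrow> 'b::ring_1"
  assumes cm: "central_alg_map \<phi>" and Asub: "subring_of A" and D: "subring_of D"
    and fg: "fin_gen_module D \<phi> A"
  shows "\<exists>R. repprop \<phi> D A R"
proof -
  from fg obtain S0 where S0: "finite S0" "S0 \<subseteq> A"
    and sp: "\<forall>a\<in>A. \<exists>c. (\<forall>s\<in>S0. c s \<in> D) \<and> a = (\<Sum>s\<in>S0. \<phi> (c s) * s)"
    unfolding fin_gen_module_def by blast
  define R where "R = card S0"
  obtain e where e: "bij_betw e {0..<R} S0" using ex_bij_betw_nat_finite[OF S0(1)] R_def by blast
  have eS: "l < R \<Longrightarrow> e l \<in> S0" for l using e by (auto simp: bij_betw_def)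
  define co where "co x = (SOME c. (\<forall>s\<in>S0. c s \<in> D) \<and> x = (\<Sum>s\<in>S0. \<phi> (c s) * s))" for x
  have co: "(\<forall>s\<in>S0. co x s \<in> D) \<and> x = (\<Sum>l<R. \<phi> (co x (e l)) * e l)" if x: "x \<in> A" for x
  proof -
    have c12: "(\<forall>s\<in>S0. co x s \<in> D) \<and> x = (\<Sum>s\<in>S0. \<phi> (co x s) * s)"
    proof -
      have ex: "\<exists>c. (\<forall>s\<in>S0. c s \<in> D) \<and> x = (\<Sum>s\<in>S0. \<phi> (c s) * s)" using sp x by blast
      show ?thesis unfolding co_def by (rule someI_ex[OF ex])
    qed
    have c3: "(\<Sum>s\<in>S0. \<phi> (co x s) * s) = (\<Sum>l<R. \<phi> (co x (e l)) * e l)"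
      using sum.reindex_bij_betw[OF e, of "\<lambda>s. \<phi> (co x s) * s"] by (simp add: atLeast0LessThan)
    show ?thesis
    proof
      show "\<forall>s\<in>S0. co x s \<in> D" using c12 by (rule conjunct1)
      show "x = (\<Sum>l<R. \<phi> (co x (e l)) * e l)" using trans[OF conjunct2[OF c12] c3] .
    qed
  qed
  have coD: "\<And>s. s \<in> S0 \<Longrightarrow> co x s \<in> D" if "x \<in> A" for x using co[OF that] by blast
  have coE: "x = (\<Sum>l<R. \<phi> (co x (e l)) * e l)" if "x \<in> A" for x using co[OF that] by blast
  have "repprop \<phi> D A R" unfolding repprop_def
  proof
    fix a assume aA: "a \<in> A"
    define \<delta> where "\<delta> l = co 1 (e l)" for l
    define \<gamma> where "\<gamma> k l = co (a * e k) (e l)" for k l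
    define g where "g i = (if i < R * R then \<gamma> (i div R) (i mod R) else \<delta> (i - R * R))" for i
    have eA: "l < R \<Longrightarrow> e l \<in> A" for l using eS S0(2) by blast
    have h2: "g i \<in> D" if i: "i < R*R+R" for i
    proof (cases "i < R * R")
      case True
      then have R0: "R > 0" by (cases R) auto
      have "i div R < R" using True R0 div_less_iff_less_mult[of R i R] div_less_iff_less_mult[of i R R] by simp
      moreover have "i mod R < R" using R0 by simp
      moreover have "a * e (i div R) \<in> A" using eA[OF \<open>i div R < R\<close>] aA sr_mult[OF Asub] by blast
      ultimately show ?thesis using True coD eS by (simp add: g_def \<gamma>_def)
    next
      case False
      then have "i - R * R < R" using i by simp
      then show ?thesis using False coD[OF sr1[OF Asub]] eS by (simp add: g_def \<delta>_def)
    qed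
    have h4: "\<gamma> k l \<in> insert 0 (insert 1 (g ` {..<R*R+R}))" if "k < R" "l < R" for k l
    proof -
      have lt: "k * R + l < R * R"
      proof -
        have "k * R + l < k * R + R" using that by simp
        also have "\<dots> = Suc k * R" by simp
        also have "\<dots> \<le> R * R" using that by (intro mult_right_mono) auto
        finally show ?thesis .
      qed
      have "g (k * R + l) = \<gamma> k l" using lt that by (simp add: g_def)
      moreover have "k * R + l \<in> {..<R*R+R}" using lt by simp
      ultimately show ?thesis by (metis image_eqI insertI2)
    qed
    have h5: "\<delta> l \<in> insert 0 (insert 1 (g ` {..<R*R+R}))" if "l < R" for l
    proof -
      have "g (R * R + l) = \<delta> l" by (simp add: g_def)
      moreover have "R * R + l \<in> {..<R*R+R}" using that by simp
      ultimately show ?thesis by (metis image_eqI insertI2)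
    qed
    have h6: "1 = (\<Sum>l<R. \<phi> (\<delta> l) * e l)" unfolding \<delta>_def by (rule coE[OF sr1[OF Asub]])
    have h7: "a * e k = (\<Sum>l<R. \<phi> (\<gamma> k l) * e l)" if "k < R" for k
      unfolding \<gamma>_def by (rule coE) (use eA[OF that] aA sr_mult[OF Asub] in blast)
    show "\<exists>r s \<gamma> \<delta> g. r \<le> R \<and> (\<forall>i<R*R+R. g i \<in> D) \<and> (\<forall>l<r. s l \<in> A)
       \<and> (\<forall>k<r. \<forall>l<r. \<gamma> k l \<in> insert 0 (insert 1 (g ` {..<R*R+R})))
       \<and> (\<forall>l<r. \<delta> l \<in> insert 0 (insert 1 (g ` {..<R*R+R})))
       \<and> 1 = (\<Sum>l<r. \<phi> (\<delta> l) * s l) \<and> (\<forall>k<r. a * s k = (\<Sum>l<r. \<phi> (\<gamma> k l) * s l))"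
      apply (rule exI[of _ R], rule exI[of _ e], rule exI[of _ \<gamma>], rule exI[of _ \<delta>], rule exI[of _ g])
      apply (intro conjI)
            apply simp
           apply (use h2 in blast)
          apply (use eA in blast)
         apply (use h4 in blast)
        apply (use h5 in blast)
       apply (rule h6)
      apply (use h7 in blast)
      done
  qed
  then show ?thesis by blast
qed

theorem mainTheorem3:
  fixes D :: "'k::field set" and \<phi> :: "'k \<Rightarrow> 'b::ring_1" and A :: "'b set"
  assumes "subring_of D"
    and "is_fraction_field_of D"
    and "central_alg_map \<phi>"
    and "standard_assumptions D \<phi> A"
  shows "(integral_bounded_degree D \<phi> A \<longrightarrow>
            (Int_K \<phi> A \<noteq> poly_over D \<longleftrightarrow> Int_D D \<noteq> poly_over D))
       \<and> (fin_gen_module D \<phi> A \<longrightarrow>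
            (Int_K \<phi> A \<noteq> poly_over D \<longleftrightarrow> Int_D D \<noteq> poly_over D))"
proof -
  note D = assms(1) and cm = assms(3)
  have Asub: "subring_of A" and phiA: "\<phi> ` D \<subseteq> A" and DA: "{k. \<phi> k \<in> A} = D"
    using assms(4) unfolding standard_assumptions_def by auto
  have easy: "Int_K \<phi> A \<noteq> poly_over D \<Longrightarrow> Int_D D \<noteq> poly_over D"
    using sub1[OF Asub phiA] sub2[OF cm phiA DA] by blast
  have hardR: "Int_K \<phi> A \<noteq> poly_over D" if ne: "Int_D D \<noteq> poly_over D" and rp: "repprop \<phi> D A R" for R
  proof -
    obtain lc c T where lc: "lc \<notin> D" "c > 0" "lc * of_nat c \<in> D" "intpoly T" "lead_coeff T = 1"
        "\<forall>r\<in>D. lc * poly T r \<in> D"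
      using get_ell[OF D ne] by blast
    show ?thesis
      by (rule hard[OF D cm Asub phiA lc, of R]) (use rp in \<open>simp add: repprop_def\<close>)
  qed
  have part1: "integral_bounded_degree D \<phi> A \<longrightarrow>
            (Int_K \<phi> A \<noteq> poly_over D \<longleftrightarrow> Int_D D \<noteq> poly_over D)"
  proof
    assume "integral_bounded_degree D \<phi> A"
    then obtain n where bd: "\<forall>a\<in>A. \<exists>p. p \<in> poly_over D \<and> lead_coeff p = 1 \<and> degree p \<le> n \<and> peval \<phi> p a = 0"
      unfolding integral_bounded_degree_def by blast
    show "Int_K \<phi> A \<noteq> poly_over D \<longleftrightarrow> Int_D D \<noteq> poly_over D"
      using easy hardR[OF _ rep_bd[OF cm Asub D bd]] by blast
  qed
  have part2: "fin_gen_module D \<phi> A \<longrightarrow>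
            (Int_K \<phi> A \<noteq> poly_over D \<longleftrightarrow> Int_D D \<noteq> poly_over D)"
  proof
    assume "fin_gen_module D \<phi> A"
    then obtain R where "repprop \<phi> D A R" using rep_fg[OF cm Asub D] by blast
    then show "Int_K \<phi> A \<noteq> poly_over D \<longleftrightarrow> Int_D D \<noteq> poly_over D"
      using easy hardR by blast
  qed
  show ?thesis using part1 part2 by blast
qed


end
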